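(* Let $(\alpha_1,\alpha_2)\in\mathbb{C}^2$ and $p_1,p_2\in\mathbb{C}[u]\setminus\{0\}$, and let $\mathcal{A}=\mathcal{A}_{\alpha_1,\alpha_2}(p_1,p_2)$ and $\tilde{\mathcal{A}}=\tilde{\mathcal{A}}_{\alpha_1,\alpha_2}(p_1,p_2)$. The following are equivalent: (i) $\mathcal{A}\neq\{0\}$; (ii) the generator $H$ is algebraically independent over $\mathbb{C}$ in $\tilde{\mathcal{A}}$; (iii) $p_1(u+\alpha_2/2)\,p_2(u+\alpha_1/2)=p_1(u-\alpha_2/2)\,p_2(u-\alpha_1/2)$ in $\mathbb{C}[u]$.
   Context: $\tilde{\mathcal{A}}_{\alpha_1,\alpha_2}(p_1,p_2)$ is the associative $\mathbb{C}$-algebra generated by $H,X_1^\pm,X_2^\pm$ with relations, for $i=1,2$: $HX_i^\pm-X_i^\pm H=\pm\alpha_iX_i^\pm$, $X_i^+X_i^-=p_i(H-\alpha_i/2)$, $X_i^-X_i^+=p_i(H+\alpha_i/2)$, and $X_1^+X_2^-=X_2^-X_1^+$, $X_1^-X_2^+=X_2^+X_1^-$. $\mathcal{A}_{\alpha_1,\alpha_2}(p_1,p_2)=\tilde{\mathcal{A}}/\mathcal{I}$ where $\mathcal{I}$ is the ideal of all $a\in\tilde{\mathcal{A}}$ such that $f(H)a=0$ for some nonzero $f\in\mathbb{C}[u]$. *)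

theory Defs
  imports "HOL-Library.Poly_Mapping" "HOL-Computational_Algebra.Polynomial"
begin

text \<open>Free associative unital C-algebra on the generators H, X1+, X1-, X2+, X2-:
  finitely supported complex-valued functions on words (lists of generators),
  with concatenation-convolution product.\<close>

datatype gen = Hg | X1p | X1m | X2p | X2m

type_synonym fa = "gen list \<Rightarrow>\<^sub>0 complex"

definition fa_mult :: "fa \<Rightarrow> fa \<Rightarrow> fa" where
  "fa_mult p q = (\<Sum>u\<in>Poly_Mapping.keys p. \<Sum>v\<in>Poly_Mapping.keys q.
      Poly_Mapping.single (u @ v) (Poly_Mapping.lookup p u * Poly_Mapping.lookup q v))"

definition fa_gen :: "gen \<Rightarrow> fa" where
  "fa_gen g = Poly_Mapping.single [g] 1"

definition fa_one :: fa where
  "fa_one = Poly_Mapping.single [] 1"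

definition fa_const :: "complex \<Rightarrow> fa" where
  "fa_const c = Poly_Mapping.single [] c"

definition fa_polyH :: "complex poly \<Rightarrow> fa" where
  "fa_polyH f = (\<Sum>i\<le>degree f. Poly_Mapping.single (replicate i Hg) (coeff f i))"

inductive_set two_sided_ideal :: "fa set \<Rightarrow> fa set" for R where
  gen: "r \<in> R \<Longrightarrow> r \<in> two_sided_ideal R"
| zero: "0 \<in> two_sided_ideal R"
| add: "a \<in> two_sided_ideal R \<Longrightarrow> b \<in> two_sided_ideal R \<Longrightarrow> a + b \<in> two_sided_ideal R"
| mult_left: "a \<in> two_sided_ideal R \<Longrightarrow> fa_mult x a \<in> two_sided_ideal R"
| mult_right: "a \<in> two_sided_ideal R \<Longrightarrow> fa_mult a x \<in> two_sided_ideal R"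

text \<open>Relations for one index i (generators xp = X_i^+, xm = X_i^-).
  Each relation is encoded as lhs - rhs.\<close>
definition rels_i :: "gen \<Rightarrow> gen \<Rightarrow> complex \<Rightarrow> complex poly \<Rightarrow> fa set" where
  "rels_i xp xm \<alpha> p =
    { fa_mult (fa_gen Hg) (fa_gen xp) - fa_mult (fa_gen xp) (fa_gen Hg) - fa_mult (fa_const \<alpha>) (fa_gen xp),
      fa_mult (fa_gen Hg) (fa_gen xm) - fa_mult (fa_gen xm) (fa_gen Hg) + fa_mult (fa_const \<alpha>) (fa_gen xm),
      fa_mult (fa_gen xp) (fa_gen xm) - fa_polyH (pcompose p [:- \<alpha> / 2, 1:]),
      fa_mult (fa_gen xm) (fa_gen xp) - fa_polyH (pcompose p [:\<alpha> / 2, 1:]) }"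

definition rels :: "complex \<Rightarrow> complex \<Rightarrow> complex poly \<Rightarrow> complex poly \<Rightarrow> fa set" where
  "rels \<alpha>1 \<alpha>2 p1 p2 =
     rels_i X1p X1m \<alpha>1 p1 \<union> rels_i X2p X2m \<alpha>2 p2 \<union>
     { fa_mult (fa_gen X1p) (fa_gen X2m) - fa_mult (fa_gen X2m) (fa_gen X1p),
       fa_mult (fa_gen X1m) (fa_gen X2p) - fa_mult (fa_gen X2p) (fa_gen X1m) }"

definition Atilde_zero :: "complex \<Rightarrow> complex \<Rightarrow> complex poly \<Rightarrow> complex poly \<Rightarrow> fa \<Rightarrow> bool" where
  "Atilde_zero \<alpha>1 \<alpha>2 p1 p2 a \<longleftrightarrow> a \<in> two_sided_ideal (rels \<alpha>1 \<alpha>2 p1 p2)"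

text \<open>Preimage in the free algebra of the ideal I = {a | f(H) a = 0 for some f \<noteq> 0} of tilde-A.\<close>
definition calI :: "complex \<Rightarrow> complex \<Rightarrow> complex poly \<Rightarrow> complex poly \<Rightarrow> fa set" where
  "calI \<alpha>1 \<alpha>2 p1 p2 = {a. \<exists>f. f \<noteq> 0 \<and> Atilde_zero \<alpha>1 \<alpha>2 p1 p2 (fa_mult (fa_polyH f) a)}"

text \<open>A = tilde-A / I is nonzero iff I is not all of tilde-A.\<close>
definition A_nonzero :: "complex \<Rightarrow> complex \<Rightarrow> complex poly \<Rightarrow> complex poly \<Rightarrow> bool" where
  "A_nonzero \<alpha>1 \<alpha>2 p1 p2 \<longleftrightarrow> (\<exists>a. a \<notin> calI \<alpha>1 \<alpha>2 p1 p2)"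

definition H_alg_indep :: "complex \<Rightarrow> complex \<Rightarrow> complex poly \<Rightarrow> complex poly \<Rightarrow> bool" where
  "H_alg_indep \<alpha>1 \<alpha>2 p1 p2 \<longleftrightarrow> (\<forall>f. f \<noteq> 0 \<longrightarrow> \<not> Atilde_zero \<alpha>1 \<alpha>2 p1 p2 (fa_polyH f))"

end

theory Submission
  imports Defs
begin


instantiation list :: (type) monoid_add
begin
definition zero_list :: "'a list" where "zero_list = []"
definition plus_list :: "'a list \<Rightarrow> 'a list \<Rightarrow> 'a list" where "plus_list = append"
instance by standard (auto simp: zero_list_def plus_list_def)
end

lemma sum_single_keys: "(\<Sum>u\<in>Poly_Mapping.keys p. Poly_Mapping.single u (Poly_Mapping.lookup p u)) = p"
proof (rule poly_mapping_eqI)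
  fix k
  show "Poly_Mapping.lookup (\<Sum>u\<in>Poly_Mapping.keys p. Poly_Mapping.single u (Poly_Mapping.lookup p u)) k = Poly_Mapping.lookup p k"
    by (cases "k \<in> Poly_Mapping.keys p") (auto simp: lookup_sum lookup_single when_def in_keys_iff)
qed

lemma fa_mult_eq: "fa_mult p q = p * q"
proof -
  have "p * q = (\<Sum>u\<in>Poly_Mapping.keys p. Poly_Mapping.single u (Poly_Mapping.lookup p u)) *
     (\<Sum>v\<in>Poly_Mapping.keys q. Poly_Mapping.single v (Poly_Mapping.lookup q v))"
    by (simp add: sum_single_keys)
  also have "\<dots> = fa_mult p q"
    unfolding fa_mult_def sum_distrib_left sum_distrib_right mult_single plus_list_def
    by (simp add: sum_distrib_left sum.swap[of _ "Poly_Mapping.keys q"])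
  finally show ?thesis by simp
qed

lemma single_nil_mult: "(Poly_Mapping.single [] c :: fa) * Poly_Mapping.single w b = Poly_Mapping.single w (c * b)"
  by (simp add: mult_single plus_list_def)
lemma mult_single_nil: "(Poly_Mapping.single w b :: fa) * Poly_Mapping.single [] c = Poly_Mapping.single w (b * c)"
  by (simp add: mult_single plus_list_def)

lemma fa_const_comm: "fa_const c * x = x * fa_const c"
proof -
  have "fa_const c * x = fa_const c * (\<Sum>u\<in>Poly_Mapping.keys x. Poly_Mapping.single u (Poly_Mapping.lookup x u))"
    by (simp add: sum_single_keys)
  also have "\<dots> = (\<Sum>u\<in>Poly_Mapping.keys x. Poly_Mapping.single u (Poly_Mapping.lookup x u)) * fa_const c"
    unfolding sum_distrib_left sum_distrib_right fa_const_def single_nil_mult mult_single_nil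
    by (simp add: mult.commute)
  finally show ?thesis by (simp add: sum_single_keys)
qed

lemma fa_const_add: "fa_const (a + b) = fa_const a + fa_const b"
  by (simp add: fa_const_def single_add)
lemma fa_const_mult: "fa_const (a * b) = fa_const a * fa_const b"
  by (simp add: fa_const_def single_nil_mult)
lemma fa_const_0[simp]: "fa_const 0 = 0"
  by (simp add: fa_const_def)
lemma one_fa: "(1::fa) = Poly_Mapping.single [] 1"
  by (metis single_one zero_list_def)
lemma fa_const_1: "fa_const 1 = 1"
  by (simp add: fa_const_def one_fa)

abbreviation HH :: fa where "HH \<equiv> fa_gen Hg"

lemma HH_power: "HH ^ i = Poly_Mapping.single (replicate i Hg) 1"
  by (induction i) (simp_all add: fa_gen_def one_fa mult_single plus_list_def)

lemma single_as_const: "Poly_Mapping.single w c = fa_const c * (Poly_Mapping.single w 1 :: fa)"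
  by (simp add: fa_const_def single_nil_mult)

lemma fa_polyH_N: "degree f \<le> N \<Longrightarrow> fa_polyH f = (\<Sum>i\<le>N. fa_const (coeff f i) * HH ^ i)"
  unfolding fa_polyH_def HH_power single_as_const[symmetric]
  by (rule sum.mono_neutral_left) (auto simp: coeff_eq_0 fa_const_def)

lemma fa_polyH_add: "fa_polyH (f + g) = fa_polyH f + fa_polyH g"
proof -
  define N where "N = max (degree f) (degree g)"
  have "degree (f + g) \<le> N" unfolding N_def by (rule degree_add_le_max)
  then show ?thesis
    using fa_polyH_N[of f N] fa_polyH_N[of g N] fa_polyH_N[of "f+g" N]
    by (simp add: N_def fa_const_add distrib_right sum.distrib)
qed

lemma fa_polyH_smult: "fa_polyH (smult a f) = fa_const a * fa_polyH f"
  using fa_polyH_N[of f "degree f"] fa_polyH_N[of "smult a f" "degree f"]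
  by (simp add: fa_const_mult sum_distrib_left mult.assoc)

lemma fa_polyH_const: "fa_polyH [:a:] = fa_const a"
  by (simp add: fa_polyH_def fa_const_def)

lemma fa_polyH_0[simp]: "fa_polyH 0 = 0"
  by (simp add: fa_polyH_def)

lemma fa_polyH_pCons0: "fa_polyH (pCons 0 h) = HH * fa_polyH h"
proof -
  have d: "degree (pCons 0 h) \<le> Suc (degree h)" by (simp add: degree_pCons_le)
  have "fa_polyH (pCons 0 h) = (\<Sum>i\<le>Suc (degree h). fa_const (coeff (pCons 0 h) i) * HH ^ i)"
    by (rule fa_polyH_N[OF d])
  also have "\<dots> = (\<Sum>i\<le>degree h. fa_const (coeff h i) * HH ^ Suc i)"
    unfolding sum.atMost_Suc_shift by simp
  also have "\<dots> = HH * fa_polyH h"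
  proof -
    have e: "HH * (fa_const c * HH^i) = fa_const c * HH^Suc i" for c i
      by (metis fa_const_comm mult.assoc power_Suc)
    show ?thesis by (simp add: fa_polyH_N[of h "degree h"] sum_distrib_left e)
  qed
  finally show ?thesis .
qed

lemma fa_polyH_pCons: "fa_polyH (pCons a f) = fa_const a + HH * fa_polyH f"
proof -
  have "pCons a f = [:a:] + pCons 0 f" by simp
  then show ?thesis by (metis fa_polyH_add fa_polyH_const fa_polyH_pCons0)
qed

lemma fa_polyH_mult: "fa_polyH (f * g) = fa_polyH f * fa_polyH g"
proof (induction f rule: pCons_induct)
  case 0 then show ?case by simp
next
  case (pCons a f)
  have "pCons a f * g = smult a g + pCons 0 (f * g)" by (simp add: mult_pCons_left)
  then show ?case
    by (simp add: fa_polyH_add fa_polyH_smult fa_polyH_pCons0 fa_polyH_pCons pCons.IH distrib_right mult.assoc)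
qed

lemma fa_polyH_diff: "fa_polyH (f - g) = fa_polyH f - fa_polyH g"
  by (metis add_diff_cancel diff_add_cancel fa_polyH_add)

lemma fa_polyH_lin: "fa_polyH [:c, 1:] = fa_const c + HH"
  by (simp add: fa_polyH_pCons fa_polyH_const fa_const_1)



lemma fa_const_uminus: "fa_const (- c) = - fa_const c"
  by (metis add_eq_0_iff2 fa_const_add fa_const_0 neg_eq_iff_add_eq_0)

lemma ideal_multL: "a \<in> two_sided_ideal R \<Longrightarrow> x * a \<in> two_sided_ideal R"
  using two_sided_ideal.mult_left fa_mult_eq by metis
lemma ideal_multR: "a \<in> two_sided_ideal R \<Longrightarrow> a * x \<in> two_sided_ideal R"
  using two_sided_ideal.mult_right fa_mult_eq by metis
lemma ideal_uminus: "a \<in> two_sided_ideal R \<Longrightarrow> - a \<in> two_sided_ideal R"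
proof -
  assume "a \<in> two_sided_ideal R"
  then have "fa_const (-1) * a \<in> two_sided_ideal R" by (rule ideal_multL)
  moreover have "fa_const (-1) * a = - a"
    by (simp add: fa_const_uminus fa_const_1)
  ultimately show ?thesis by simp
qed
lemma ideal_diff: "a \<in> two_sided_ideal R \<Longrightarrow> b \<in> two_sided_ideal R \<Longrightarrow> a - b \<in> two_sided_ideal R"
  using two_sided_ideal.add[OF _ ideal_uminus] by (metis diff_conv_add_uminus)

definition ceq :: "fa set \<Rightarrow> fa \<Rightarrow> fa \<Rightarrow> bool" where
  "ceq R a b \<longleftrightarrow> a - b \<in> two_sided_ideal R"

lemma ceq_refl: "ceq R a a" by (simp add: ceq_def two_sided_ideal.zero)
lemma ceq_sym: "ceq R a b \<Longrightarrow> ceq R b a"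
  unfolding ceq_def by (metis ideal_uminus minus_diff_eq)
lemma ceq_trans: "ceq R a b \<Longrightarrow> ceq R b c \<Longrightarrow> ceq R a c"
proof -
  assume "ceq R a b" "ceq R b c"
  moreover have "a - c = (a - b) + (b - c)" by simp
  ultimately show ?thesis unfolding ceq_def by (metis two_sided_ideal.add)
qed
lemma ceq_multL: "ceq R a b \<Longrightarrow> ceq R (x * a) (x * b)"
  unfolding ceq_def by (metis ideal_multL right_diff_distrib)
lemma ceq_multR: "ceq R a b \<Longrightarrow> ceq R (a * x) (b * x)"
  unfolding ceq_def by (metis ideal_multR left_diff_distrib)
lemma ceq_add: "ceq R a b \<Longrightarrow> ceq R c d \<Longrightarrow> ceq R (a + c) (b + d)"
  unfolding ceq_def by (metis two_sided_ideal.add add_diff_add)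
lemma ceq_gen: "a - b \<in> R \<Longrightarrow> ceq R a b"
  unfolding ceq_def by (rule two_sided_ideal.gen)

lemma commute_poly:
  assumes "ceq R (X * HH) (fa_polyH [:c, 1:] * X)"
  shows "ceq R (X * fa_polyH f) (fa_polyH (pcompose f [:c, 1:]) * X)"
proof (induction f rule: pCons_induct)
  case 0 then show ?case by (simp add: ceq_refl)
next
  case (pCons a g)
  let ?L = "fa_polyH [:c, 1:]" and ?G = "fa_polyH g" and ?G' = "fa_polyH (pcompose g [:c, 1:])"
  have "X * fa_polyH (pCons a g) = fa_const a * X + (X * HH) * ?G"
    unfolding fa_polyH_pCons distrib_left mult.assoc fa_const_comm[of a X] by simp
  moreover have "ceq R ((X * HH) * ?G) (?L * (?G' * X))"
  proof -
    have 1: "ceq R ((X * HH) * ?G) (?L * (X * ?G))" using ceq_multR[OF assms, of ?G] by (simp only: mult.assoc)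
    show ?thesis by (rule ceq_trans[OF 1]) (rule ceq_multL[OF pCons.IH])
  qed
  moreover have "fa_polyH (pcompose (pCons a g) [:c, 1:]) * X = fa_const a * X + ?L * (?G' * X)"
  proof -
    have "pcompose (pCons a g) [:c,1:] = [:a:] + [:c,1:] * pcompose g [:c,1:]" by (simp add: pcompose_pCons)
    then have "fa_polyH (pcompose (pCons a g) [:c, 1:]) = fa_const a + ?L * ?G'"
      by (simp only: fa_polyH_add fa_polyH_const fa_polyH_mult)
    then show ?thesis by (simp only: distrib_right mult.assoc)
  qed
  ultimately show ?case by (metis ceq_add ceq_refl)
qed

lemma rels_facts:
  fixes \<alpha>1 \<alpha>2 :: complex and p1 p2 :: "complex poly"
  defines "R \<equiv> rels \<alpha>1 \<alpha>2 p1 p2"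
  shows "ceq R (fa_gen X1p * HH) (fa_polyH [:-\<alpha>1, 1:] * fa_gen X1p)"
    and "ceq R (fa_gen X1m * HH) (fa_polyH [:\<alpha>1, 1:] * fa_gen X1m)"
    and "ceq R (fa_gen X2p * HH) (fa_polyH [:-\<alpha>2, 1:] * fa_gen X2p)"
    and "ceq R (fa_gen X2m * HH) (fa_polyH [:\<alpha>2, 1:] * fa_gen X2m)"
    and "ceq R (fa_gen X1p * fa_gen X1m) (fa_polyH (pcompose p1 [:- \<alpha>1 / 2, 1:]))"
    and "ceq R (fa_gen X1m * fa_gen X1p) (fa_polyH (pcompose p1 [:\<alpha>1 / 2, 1:]))"
    and "ceq R (fa_gen X2p * fa_gen X2m) (fa_polyH (pcompose p2 [:- \<alpha>2 / 2, 1:]))"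
    and "ceq R (fa_gen X2m * fa_gen X2p) (fa_polyH (pcompose p2 [:\<alpha>2 / 2, 1:]))"
    and "ceq R (fa_gen X1p * fa_gen X2m) (fa_gen X2m * fa_gen X1p)"
    and "ceq R (fa_gen X1m * fa_gen X2p) (fa_gen X2p * fa_gen X1m)"
proof -
  have gen: "\<And>r. r \<in> rels \<alpha>1 \<alpha>2 p1 p2 \<Longrightarrow> r \<in> R" unfolding R_def by simp
  have lin: "\<And>X c. X * HH - fa_polyH [:-c, 1:] * X = - (HH * X - X * HH - fa_const c * X)"
    by (simp add: fa_polyH_lin algebra_simps fa_const_uminus)
  have lin2: "\<And>X c. X * HH - fa_polyH [:c, 1:] * X = - (HH * X - X * HH + fa_const c * X)"
    by (simp add: fa_polyH_lin algebra_simps)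
  show "ceq R (fa_gen X1p * HH) (fa_polyH [:-\<alpha>1, 1:] * fa_gen X1p)"
    unfolding ceq_def lin by (rule ideal_uminus, rule two_sided_ideal.gen, rule gen)
      (unfold rels_def rels_i_def fa_mult_eq, blast)
  show "ceq R (fa_gen X1m * HH) (fa_polyH [:\<alpha>1, 1:] * fa_gen X1m)"
    unfolding ceq_def lin2 by (rule ideal_uminus, rule two_sided_ideal.gen, rule gen)
      (unfold rels_def rels_i_def fa_mult_eq, blast)
  show "ceq R (fa_gen X2p * HH) (fa_polyH [:-\<alpha>2, 1:] * fa_gen X2p)"
    unfolding ceq_def lin by (rule ideal_uminus, rule two_sided_ideal.gen, rule gen)
      (unfold rels_def rels_i_def fa_mult_eq, blast)
  show "ceq R (fa_gen X2m * HH) (fa_polyH [:\<alpha>2, 1:] * fa_gen X2m)"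
    unfolding ceq_def lin2 by (rule ideal_uminus, rule two_sided_ideal.gen, rule gen)
      (unfold rels_def rels_i_def fa_mult_eq, blast)
  show "ceq R (fa_gen X1p * fa_gen X1m) (fa_polyH (pcompose p1 [:- \<alpha>1 / 2, 1:]))"
    by (rule ceq_gen, rule gen) (unfold rels_def rels_i_def fa_mult_eq, blast)
  show "ceq R (fa_gen X1m * fa_gen X1p) (fa_polyH (pcompose p1 [:\<alpha>1 / 2, 1:]))"
    by (rule ceq_gen, rule gen) (unfold rels_def rels_i_def fa_mult_eq, blast)
  show "ceq R (fa_gen X2p * fa_gen X2m) (fa_polyH (pcompose p2 [:- \<alpha>2 / 2, 1:]))"
    by (rule ceq_gen, rule gen) (unfold rels_def rels_i_def fa_mult_eq, blast)
  show "ceq R (fa_gen X2m * fa_gen X2p) (fa_polyH (pcompose p2 [:\<alpha>2 / 2, 1:]))"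
    by (rule ceq_gen, rule gen) (unfold rels_def rels_i_def fa_mult_eq, blast)
  show "ceq R (fa_gen X1p * fa_gen X2m) (fa_gen X2m * fa_gen X1p)"
    by (rule ceq_gen, rule gen) (unfold rels_def rels_i_def fa_mult_eq, blast)
  show "ceq R (fa_gen X1m * fa_gen X2p) (fa_gen X2p * fa_gen X1m)"
    by (rule ceq_gen, rule gen) (unfold rels_def rels_i_def fa_mult_eq, blast)
qed


lemma ceq_mult: "ceq R a b \<Longrightarrow> ceq R c d \<Longrightarrow> ceq R (a * c) (b * d)"
  by (metis ceq_multL ceq_multR ceq_trans)

lemma not_iii_dep:
  fixes \<alpha>1 \<alpha>2 :: complex and p1 p2 :: "complex poly"
  assumes "pcompose p1 [:\<alpha>2 / 2, 1:] * pcompose p2 [:\<alpha>1 / 2, 1:] \<noteq>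
            pcompose p1 [:- \<alpha>2 / 2, 1:] * pcompose p2 [:- \<alpha>1 / 2, 1:]"
  shows "\<exists>f. f \<noteq> 0 \<and> fa_polyH f \<in> two_sided_ideal (rels \<alpha>1 \<alpha>2 p1 p2)"
proof -
  define R where "R = rels \<alpha>1 \<alpha>2 p1 p2"
  define a1p where "a1p = fa_gen X1p"
  define a1m where "a1m = fa_gen X1m"
  define a2p where "a2p = fa_gen X2p"
  define a2m where "a2m = fa_gen X2m"
  define pP where "pP = pcompose p2 [:- \<alpha>2 / 2, 1:]"
  define pQ where "pQ = pcompose p1 [:\<alpha>1 / 2, 1:]"
  define pP1 where "pP1 = pcompose pP [:\<alpha>1, 1:]"
  define pQ1 where "pQ1 = pcompose pQ [:- \<alpha>2, 1:]"
  note rf = rels_facts[of \<alpha>1 \<alpha>2 p1 p2, folded R_def a1p_def a1m_def a2p_def a2m_def pP_def pQ_def]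
  define A where "A = a1m * a2p * a2m * a1p"
  have c1: "ceq R (a1m * fa_polyH pP) (fa_polyH pP1 * a1m)"
    unfolding pP1_def pP_def a1m_def by (rule commute_poly) (rule rf(2)[unfolded a1m_def])
  have c2: "ceq R (a2p * fa_polyH pQ) (fa_polyH pQ1 * a2p)"
    unfolding pQ1_def pQ_def a2p_def by (rule commute_poly) (rule rf(3)[unfolded a2p_def])
  have "ceq R A (fa_polyH pP1 * fa_polyH pQ)"
  proof -
    have "A = a1m * (a2p * a2m) * a1p" unfolding A_def by (simp only: mult.assoc)
    moreover have "ceq R (a1m * (a2p * a2m) * a1p) (a1m * fa_polyH pP * a1p)"
      by (rule ceq_multR, rule ceq_multL, rule rf(7))
    moreover have "ceq R (a1m * fa_polyH pP * a1p) (fa_polyH pP1 * a1m * a1p)"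
      by (rule ceq_multR, rule c1[unfolded pP_def[symmetric]])
    moreover have "ceq R (fa_polyH pP1 * a1m * a1p) (fa_polyH pP1 * fa_polyH pQ)"
      unfolding mult.assoc by (rule ceq_multL, rule rf(6))
    ultimately show ?thesis by (metis ceq_trans)
  qed
  moreover have "ceq R A (fa_polyH pQ1 * fa_polyH pP)"
  proof -
    have "A = (a1m * a2p) * (a2m * a1p)" unfolding A_def by (simp only: mult.assoc)
    moreover have "ceq R ((a1m * a2p) * (a2m * a1p)) ((a2p * a1m) * (a1p * a2m))"
      by (rule ceq_mult, rule rf(10), rule ceq_sym, rule rf(9))
    moreover have "(a2p * a1m) * (a1p * a2m) = a2p * (a1m * a1p) * a2m" by (simp only: mult.assoc)
    moreover have "ceq R (a2p * (a1m * a1p) * a2m) (a2p * fa_polyH pQ * a2m)"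
      by (rule ceq_multR, rule ceq_multL, rule rf(6))
    moreover have "ceq R (a2p * fa_polyH pQ * a2m) (fa_polyH pQ1 * a2p * a2m)"
      by (rule ceq_multR, rule c2)
    moreover have "ceq R (fa_polyH pQ1 * a2p * a2m) (fa_polyH pQ1 * fa_polyH pP)"
      unfolding mult.assoc by (rule ceq_multL, rule rf(7))
    ultimately show ?thesis by (metis ceq_trans)
  qed
  ultimately have "ceq R (fa_polyH pP1 * fa_polyH pQ) (fa_polyH pQ1 * fa_polyH pP)"
    by (metis ceq_sym ceq_trans)
  then have mem: "fa_polyH (pP1 * pQ - pQ1 * pP) \<in> two_sided_ideal R"
    unfolding ceq_def by (simp only: fa_polyH_diff fa_polyH_mult)
  have nz: "pP1 * pQ - pQ1 * pP \<noteq> 0"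
  proof
    assume "pP1 * pQ - pQ1 * pP = 0"
    then have z: "poly (pP1 * pQ - pQ1 * pP) v = 0" for v by simp
    have "poly (pcompose p1 [:\<alpha>2 / 2, 1:] * pcompose p2 [:\<alpha>1 / 2, 1:]) u =
          poly (pcompose p1 [:- \<alpha>2 / 2, 1:] * pcompose p2 [:- \<alpha>1 / 2, 1:]) u" for u
    proof -
      have "poly (pP1 * pQ - pQ1 * pP) (u - \<alpha>1/2 + \<alpha>2/2) = 0" by (rule z)
      moreover have "- \<alpha>2 / 2 + (\<alpha>1 + (u - \<alpha>1 / 2 + \<alpha>2 / 2)) = \<alpha>1/2 + u"
        "\<alpha>1 / 2 + (u - \<alpha>1 / 2 + \<alpha>2 / 2) = \<alpha>2/2 + u"
        "\<alpha>1 / 2 + (- \<alpha>2 + (u - \<alpha>1 / 2 + \<alpha>2 / 2)) = -\<alpha>2/2 + u"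
        "- \<alpha>2 / 2 + (u - \<alpha>1 / 2 + \<alpha>2 / 2) = -\<alpha>1/2 + u"
        by (simp_all add: field_simps)
      ultimately show ?thesis
        by (simp add: pP1_def pQ_def pQ1_def pP_def poly_pcompose mult.commute)
    qed
    then have "poly (pcompose p1 [:\<alpha>2 / 2, 1:] * pcompose p2 [:\<alpha>1 / 2, 1:]) =
          poly (pcompose p1 [:- \<alpha>2 / 2, 1:] * pcompose p2 [:- \<alpha>1 / 2, 1:])" by auto
    with assms show False by (simp only: poly_eq_poly_eq_iff)
  qed
  show ?thesis using mem nz unfolding R_def by blast
qed



context
  fixes \<alpha>1 \<alpha>2 :: complex and p1 p2 :: "complex poly"
begin

fun mg :: "gen \<Rightarrow> complex \<Rightarrow> complex" where
  "mg Hg z = z"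
| "mg X1p z = 1"
| "mg X1m z = poly p1 (z + \<alpha>1 / 2)"
| "mg X2p z = poly p2 (z - \<alpha>2 / 2)"
| "mg X2m z = 1"

fun sg :: "gen \<Rightarrow> complex" where
  "sg Hg = 0"
| "sg X1p = - \<alpha>1"
| "sg X1m = \<alpha>1"
| "sg X2p = - \<alpha>2"
| "sg X2m = \<alpha>2"

primrec opw :: "gen list \<Rightarrow> (complex \<Rightarrow> complex) \<Rightarrow> complex \<Rightarrow> complex" where
  "opw [] \<psi> = \<psi>"
| "opw (g # w) \<psi> = (\<lambda>z. mg g z * opw w \<psi> (z + sg g))"

definition act :: "fa \<Rightarrow> (complex \<Rightarrow> complex) \<Rightarrow> complex \<Rightarrow> complex" where
  "act a \<psi> = (\<lambda>z. \<Sum>u\<in>Poly_Mapping.keys a. Poly_Mapping.lookup a u * opw u \<psi> z)"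

lemma opw_append: "opw (u @ v) \<psi> = opw u (opw v \<psi>)"
  by (induction u) auto

lemma opw_lin: "opw w (\<lambda>z. \<Sum>v\<in>S. c v * F v z) z = (\<Sum>v\<in>S. c v * opw w (F v) z)"
  by (induction w arbitrary: z) (auto simp: sum_distrib_left mult.left_commute)

lemma opw_zero: "opw w (\<lambda>z. 0) z = 0"
  by (induction w arbitrary: z) auto

lemma act_superset:
  assumes "finite S" "Poly_Mapping.keys a \<subseteq> S"
  shows "act a \<psi> z = (\<Sum>u\<in>S. Poly_Mapping.lookup a u * opw u \<psi> z)"
  unfolding act_def using assms
  by (intro sum.mono_neutral_left) (auto simp: in_keys_iff)

lemma act_add: "act (a + b) \<psi> z = act a \<psi> z + act b \<psi> z"
proof -
  let ?S = "Poly_Mapping.keys a \<union> Poly_Mapping.keys b"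
  have f: "finite ?S" by simp
  have "act (a + b) \<psi> z = (\<Sum>u\<in>?S. Poly_Mapping.lookup (a + b) u * opw u \<psi> z)"
    by (rule act_superset[OF f]) (rule keys_add)
  also have "\<dots> = (\<Sum>u\<in>?S. Poly_Mapping.lookup a u * opw u \<psi> z) + (\<Sum>u\<in>?S. Poly_Mapping.lookup b u * opw u \<psi> z)"
    by (simp add: lookup_add distrib_right sum.distrib)
  also have "\<dots> = act a \<psi> z + act b \<psi> z"
    using act_superset[OF f, of a] act_superset[OF f, of b] by simp
  finally show ?thesis .
qed

lemma act_zero: "act 0 \<psi> z = 0"
  by (simp add: act_def)

lemma act_diff: "act (a - b) \<psi> z = act a \<psi> z - act b \<psi> z"
  using act_add[of "a - b" b] by simp

lemma act_single: "act (Poly_Mapping.single w c) \<psi> z = c * opw w \<psi> z"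
  by (simp add: act_def)

lemma act_sum: "act (\<Sum>i\<in>T. F i) \<psi> z = (\<Sum>i\<in>T. act (F i) \<psi> z)"
  by (induction T rule: infinite_finite_induct) (auto simp: act_zero act_add)

lemma act_mult: "act (p * q) \<psi> z = act p (act q \<psi>) z"
proof -
  have "act (p * q) \<psi> z = (\<Sum>u\<in>Poly_Mapping.keys p. \<Sum>v\<in>Poly_Mapping.keys q.
      Poly_Mapping.lookup p u * Poly_Mapping.lookup q v * opw (u @ v) \<psi> z)"
    unfolding fa_mult_eq[symmetric] fa_mult_def by (simp add: act_sum act_single)
  also have "\<dots> = act p (act q \<psi>) z"
    unfolding act_def opw_lin by (simp add: opw_append sum_distrib_left mult.assoc)
  finally show ?thesis .
qed

lemma act_gen: "act (fa_gen g) \<psi> z = mg g z * \<psi> (z + sg g)"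
  by (simp add: fa_gen_def act_single)

lemma act_const: "act (fa_const c) \<psi> z = c * \<psi> z"
  by (simp add: fa_const_def act_single)

lemma opw_rep: "opw (replicate i Hg) \<psi> z = z ^ i * \<psi> z"
  by (induction i) auto

lemma act_polyH: "act (fa_polyH f) \<psi> z = poly f z * \<psi> z"
  by (simp add: fa_polyH_def act_sum act_single opw_rep poly_altdef sum_distrib_right mult.assoc)

lemma act_rels:
  assumes iii: "pcompose p1 [:\<alpha>2 / 2, 1:] * pcompose p2 [:\<alpha>1 / 2, 1:] =
            pcompose p1 [:- \<alpha>2 / 2, 1:] * pcompose p2 [:- \<alpha>1 / 2, 1:]"
  and r: "r \<in> rels \<alpha>1 \<alpha>2 p1 p2"
  shows "act r \<psi> z = 0"
proof -
  have cross: "poly p1 (z + \<alpha>1 / 2) * poly p2 (\<alpha>1 + z - \<alpha>2 / 2) =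
        poly p2 (z - \<alpha>2 / 2) * poly p1 (z + \<alpha>1 / 2 - \<alpha>2)" for z
  proof -
    have "poly (pcompose p1 [:\<alpha>2 / 2, 1:] * pcompose p2 [:\<alpha>1 / 2, 1:]) (z + \<alpha>1/2 - \<alpha>2/2) =
          poly (pcompose p1 [:- \<alpha>2 / 2, 1:] * pcompose p2 [:- \<alpha>1 / 2, 1:]) (z + \<alpha>1/2 - \<alpha>2/2)"
      using iii by simp
    moreover have "\<alpha>2 / 2 + (z + \<alpha>1 / 2 - \<alpha>2 / 2) = z + \<alpha>1 / 2"
      "\<alpha>1 / 2 + (z + \<alpha>1 / 2 - \<alpha>2 / 2) = \<alpha>1 + z - \<alpha>2 / 2"
      "- \<alpha>2 / 2 + (z + \<alpha>1 / 2 - \<alpha>2 / 2) = z + \<alpha>1 / 2 - \<alpha>2"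
      "- \<alpha>1 / 2 + (z + \<alpha>1 / 2 - \<alpha>2 / 2) = z - \<alpha>2 / 2"
      by (simp_all add: field_simps)
    ultimately show ?thesis by (simp add: poly_pcompose mult.commute)
  qed
  show ?thesis using r
    unfolding rels_def rels_i_def fa_mult_eq
    apply (simp only: Un_iff insert_iff empty_iff simp_thms)
    apply (elim disjE; hypsubst)
    apply (simp_all add: act_diff act_add act_mult act_gen act_const act_polyH poly_pcompose algebra_simps cross)
    done
qed

lemma act_ideal:
  assumes iii: "pcompose p1 [:\<alpha>2 / 2, 1:] * pcompose p2 [:\<alpha>1 / 2, 1:] =
            pcompose p1 [:- \<alpha>2 / 2, 1:] * pcompose p2 [:- \<alpha>1 / 2, 1:]"
  shows "a \<in> two_sided_ideal (rels \<alpha>1 \<alpha>2 p1 p2) \<Longrightarrow> \<forall>\<psi> z. act a \<psi> z = 0"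
proof (induction rule: two_sided_ideal.induct)
  case (gen r) then show ?case using act_rels[OF iii] by blast
next
  case zero then show ?case by (simp add: act_zero)
next
  case (add a b) then show ?case by (simp add: act_add)
next
  case (mult_left a x)
  then have h: "act a \<psi> = (\<lambda>z. 0)" for \<psi> by auto
  have "act x (\<lambda>z. 0) z = 0" for z by (simp add: act_def opw_zero)
  then show ?case by (simp add: fa_mult_eq act_mult h)
next
  case (mult_right a x)
  then show ?case by (simp add: fa_mult_eq act_mult)
qed

lemma iii_indep:
  assumes iii: "pcompose p1 [:\<alpha>2 / 2, 1:] * pcompose p2 [:\<alpha>1 / 2, 1:] =
            pcompose p1 [:- \<alpha>2 / 2, 1:] * pcompose p2 [:- \<alpha>1 / 2, 1:]"
  shows "H_alg_indep \<alpha>1 \<alpha>2 p1 p2"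
  unfolding H_alg_indep_def Atilde_zero_def
proof (intro allI impI notI)
  fix f :: "complex poly"
  assume "f \<noteq> 0" "fa_polyH f \<in> two_sided_ideal (rels \<alpha>1 \<alpha>2 p1 p2)"
  then have "act (fa_polyH f) (\<lambda>_. 1) z = 0" for z using act_ideal[OF iii] by blast
  then have "poly f z = 0" for z by (simp add: act_polyH)
  then have "f = 0" using poly_all_0_iff_0 by blast
  with \<open>f \<noteq> 0\<close> show False by simp
qed

end


theorem mainTheorem4:
  fixes \<alpha>1 \<alpha>2 :: complex and p1 p2 :: "complex poly"
  assumes "p1 \<noteq> 0" and "p2 \<noteq> 0"
  shows "(A_nonzero \<alpha>1 \<alpha>2 p1 p2 \<longleftrightarrow> H_alg_indep \<alpha>1 \<alpha>2 p1 p2) \<and>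
         (H_alg_indep \<alpha>1 \<alpha>2 p1 p2 \<longleftrightarrow>
            pcompose p1 [:\<alpha>2 / 2, 1:] * pcompose p2 [:\<alpha>1 / 2, 1:] =
            pcompose p1 [:- \<alpha>2 / 2, 1:] * pcompose p2 [:- \<alpha>1 / 2, 1:])"
proof
  show "A_nonzero \<alpha>1 \<alpha>2 p1 p2 \<longleftrightarrow> H_alg_indep \<alpha>1 \<alpha>2 p1 p2"
  proof
    assume "A_nonzero \<alpha>1 \<alpha>2 p1 p2"
    then obtain a where a: "\<And>f. f \<noteq> 0 \<Longrightarrow> fa_polyH f * a \<notin> two_sided_ideal (rels \<alpha>1 \<alpha>2 p1 p2)"
      unfolding A_nonzero_def calI_def Atilde_zero_def fa_mult_eq by blast
    show "H_alg_indep \<alpha>1 \<alpha>2 p1 p2"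
      unfolding H_alg_indep_def Atilde_zero_def using a ideal_multR by blast
  next
    assume h: "H_alg_indep \<alpha>1 \<alpha>2 p1 p2"
    have "(1::fa) \<notin> calI \<alpha>1 \<alpha>2 p1 p2"
      using h unfolding H_alg_indep_def calI_def Atilde_zero_def fa_mult_eq by auto
    then show "A_nonzero \<alpha>1 \<alpha>2 p1 p2" unfolding A_nonzero_def by blast
  qed
next
  show "H_alg_indep \<alpha>1 \<alpha>2 p1 p2 \<longleftrightarrow>
            pcompose p1 [:\<alpha>2 / 2, 1:] * pcompose p2 [:\<alpha>1 / 2, 1:] =
            pcompose p1 [:- \<alpha>2 / 2, 1:] * pcompose p2 [:- \<alpha>1 / 2, 1:]"
  proof
    assume h: "H_alg_indep \<alpha>1 \<alpha>2 p1 p2"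
    show "pcompose p1 [:\<alpha>2 / 2, 1:] * pcompose p2 [:\<alpha>1 / 2, 1:] =
            pcompose p1 [:- \<alpha>2 / 2, 1:] * pcompose p2 [:- \<alpha>1 / 2, 1:]"
    proof (rule ccontr)
      assume "pcompose p1 [:\<alpha>2 / 2, 1:] * pcompose p2 [:\<alpha>1 / 2, 1:] \<noteq>
            pcompose p1 [:- \<alpha>2 / 2, 1:] * pcompose p2 [:- \<alpha>1 / 2, 1:]"
      from not_iii_dep[OF this] h show False
        unfolding H_alg_indep_def Atilde_zero_def by blast
    qed
  next
    assume "pcompose p1 [:\<alpha>2 / 2, 1:] * pcompose p2 [:\<alpha>1 / 2, 1:] =
            pcompose p1 [:- \<alpha>2 / 2, 1:] * pcompose p2 [:- \<alpha>1 / 2, 1:]"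
    then show "H_alg_indep \<alpha>1 \<alpha>2 p1 p2" by (rule iii_indep)
  qed
qed

end
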